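(* Let $p\colon X\to B$ be a Boolean set and let $G$ be an ultrafilter of $(X,\le)$. If $x,y\in X$ satisfy $x\sim y$ and $x\vee y\in G$, then $x\in G$ or $y\in G$.
   Context: Convention: a "Boolean algebra" means a generalized Boolean algebra (relatively complemented distributive lattice with $0$). Presheaf of sets over a meet semilattice $E$: pairwise disjoint sets $X_e$, restriction maps $x\mapsto x|^e_f$ for $e\ge f$ with $|^e_e=\mathrm{id}$ and $(x|^e_f)|^f_g=x|^e_g$; $p(x)=e$ iff $x\in X_e$; global support: all $X_e\neq\emptyset$. Order: $x\le y$ iff $p(x)\le p(y)$ and $x=y|^{p(y)}_{p(x)}$. Compatibility $x\sim y$: $x\wedge y$ exists and $p(x\wedge y)=p(x)\wedge p(y)$. A Boolean set is a presheaf $p\colon X\to B$ with global support over a Boolean algebra $B$ such that $(X,\le)$ has least element $0$, compatible pairs have joins, and $p(x)=0\Rightarrow x=0$. In a poset, a filter is a non-empty, down directed, upwardly closed subset; an ultrafilter is a maximal filter among those not equal to the whole poset. *)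

theory Defs
  imports Main
begin

definition gen_boolean_algebra :: "'b::{distrib_lattice,order_bot} itself \<Rightarrow> bool" where
  "gen_boolean_algebra _ \<longleftrightarrow>
     (\<forall>a b c::'b. a \<le> b \<and> b \<le> c \<longrightarrow> (\<exists>d. inf b d = a \<and> sup b d = c))"

text \<open>Presheaf of sets over the meet semilattice 'b: the set X is the type 'x,
  p x = e iff x \<in> X_e, and res x f = x|^{p x}_f for f \<le> p x.\<close>
definition presheaf :: "('x \<Rightarrow> 'b::semilattice_inf) \<Rightarrow> ('x \<Rightarrow> 'b \<Rightarrow> 'x) \<Rightarrow> bool" where
  "presheaf p res \<longleftrightarrow>
     (\<forall>x f. f \<le> p x \<longrightarrow> p (res x f) = f) \<and>
     (\<forall>x. res x (p x) = x) \<and>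
     (\<forall>x f g. g \<le> f \<and> f \<le> p x \<longrightarrow> res (res x f) g = res x g)"

definition global_support :: "('x \<Rightarrow> 'b) \<Rightarrow> bool" where
  "global_support p \<longleftrightarrow> (\<forall>e. \<exists>x. p x = e)"

definition psleq :: "('x \<Rightarrow> 'b::order) \<Rightarrow> ('x \<Rightarrow> 'b \<Rightarrow> 'x) \<Rightarrow> 'x \<Rightarrow> 'x \<Rightarrow> bool" where
  "psleq p res x y \<longleftrightarrow> p x \<le> p y \<and> x = res y (p x)"

definition is_meet :: "('x \<Rightarrow> 'x \<Rightarrow> bool) \<Rightarrow> 'x \<Rightarrow> 'x \<Rightarrow> 'x \<Rightarrow> bool" where
  "is_meet le x y m \<longleftrightarrow> le m x \<and> le m y \<and> (\<forall>z. le z x \<and> le z y \<longrightarrow> le z m)"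

definition is_join :: "('x \<Rightarrow> 'x \<Rightarrow> bool) \<Rightarrow> 'x \<Rightarrow> 'x \<Rightarrow> 'x \<Rightarrow> bool" where
  "is_join le x y j \<longleftrightarrow> le x j \<and> le y j \<and> (\<forall>z. le x z \<and> le y z \<longrightarrow> le j z)"

definition compatible :: "('x \<Rightarrow> 'b::semilattice_inf) \<Rightarrow> ('x \<Rightarrow> 'b \<Rightarrow> 'x) \<Rightarrow> 'x \<Rightarrow> 'x \<Rightarrow> bool" where
  "compatible p res x y \<longleftrightarrow>
     (\<exists>m. is_meet (psleq p res) x y m \<and> p m = inf (p x) (p y))"

definition boolean_set ::
  "('x \<Rightarrow> 'b::{distrib_lattice,order_bot}) \<Rightarrow> ('x \<Rightarrow> 'b \<Rightarrow> 'x) \<Rightarrow> bool" where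
  "boolean_set p res \<longleftrightarrow>
     gen_boolean_algebra TYPE('b) \<and> presheaf p res \<and> global_support p \<and>
     (\<exists>z. (\<forall>x. psleq p res z x) \<and> (\<forall>x. p x = bot \<longrightarrow> x = z)) \<and>
     (\<forall>x y. compatible p res x y \<longrightarrow> (\<exists>j. is_join (psleq p res) x y j))"

definition is_filter :: "('x \<Rightarrow> 'x \<Rightarrow> bool) \<Rightarrow> 'x set \<Rightarrow> bool" where
  "is_filter le F \<longleftrightarrow> F \<noteq> {} \<and>
     (\<forall>a\<in>F. \<forall>b\<in>F. \<exists>c\<in>F. le c a \<and> le c b) \<and>
     (\<forall>a\<in>F. \<forall>b. le a b \<longrightarrow> b \<in> F)"

definition is_ultrafilter :: "('x \<Rightarrow> 'x \<Rightarrow> bool) \<Rightarrow> 'x set \<Rightarrow> bool" where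
  "is_ultrafilter le F \<longleftrightarrow> is_filter le F \<and> F \<noteq> UNIV \<and>
     (\<forall>F'. is_filter le F' \<and> F' \<noteq> UNIV \<and> F \<subseteq> F' \<longrightarrow> F' = F)"

end

theory Submission
  imports Defs
begin

theorem lemma3p7:
  fixes p :: "'x \<Rightarrow> 'b::{distrib_lattice,order_bot}"
    and res :: "'x \<Rightarrow> 'b \<Rightarrow> 'x"
    and G :: "'x set"
  assumes "boolean_set p res"
    and "is_ultrafilter (psleq p res) G"
    and "compatible p res x y"
    and "is_join (psleq p res) x y j"
    and "j \<in> G"
  shows "x \<in> G \<or> y \<in> G"
proof -
  let ?le = "psleq p res"
  have ps: "presheaf p res" and gs: "global_support p" using assms(1) unfolding boolean_set_def by auto
  have P1: "\<And>x f. f \<le> p x \<Longrightarrow> p (res x f) = f"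
   and P2: "\<And>x. res x (p x) = x"
   and P3: "\<And>x f g. g \<le> f \<Longrightarrow> f \<le> p x \<Longrightarrow> res (res x f) g = res x g"
    using ps unfolding presheaf_def by auto
  have pd: "\<And>a b. ?le a b \<Longrightarrow> p a \<le> p b" unfolding psleq_def by blast
  obtain z where z1: "\<And>w. ?le z w" and z2: "\<And>w. p w = bot \<Longrightarrow> w = z"
    using assms(1) unfolding boolean_set_def by blast
  have pz: "p z = bot"
  proof -
    obtain w where "p w = bot" using gs unfolding global_support_def by blast
    with pd[OF z1[of w]] show ?thesis by (simp add: bot_unique)
  qed
  have Gf: "G \<noteq> {}" "\<And>a b. a \<in> G \<Longrightarrow> b \<in> G \<Longrightarrow> \<exists>c\<in>G. ?le c a \<and> ?le c b"
    "\<And>a b. a \<in> G \<Longrightarrow> ?le a b \<Longrightarrow> b \<in> G"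
    and GU: "G \<noteq> UNIV"
    and Gmax: "\<And>F'. is_filter ?le F' \<Longrightarrow> F' \<noteq> UNIV \<Longrightarrow> G \<subseteq> F' \<Longrightarrow> F' = G"
  proof -
    have A: "is_filter ?le G" "G \<noteq> UNIV" "\<forall>F'. is_filter ?le F' \<and> F' \<noteq> UNIV \<and> G \<subseteq> F' \<longrightarrow> F' = G"
      using assms(2) unfolding is_ultrafilter_def by simp_all
    have B: "G \<noteq> {}" "\<forall>a\<in>G. \<forall>b\<in>G. \<exists>c\<in>G. ?le c a \<and> ?le c b" "\<forall>a\<in>G. \<forall>b. ?le a b \<longrightarrow> b \<in> G"
      using A(1) unfolding is_filter_def by simp_all
    show "G \<noteq> {}" by (rule B(1))
    show "\<And>a b. a \<in> G \<Longrightarrow> b \<in> G \<Longrightarrow> \<exists>c\<in>G. ?le c a \<and> ?le c b" using B(2) by blast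
    show "\<And>a b. a \<in> G \<Longrightarrow> ?le a b \<Longrightarrow> b \<in> G" using B(3) by blast
    show "G \<noteq> UNIV" by (rule A(2))
    show "\<And>F'. is_filter ?le F' \<Longrightarrow> F' \<noteq> UNIV \<Longrightarrow> G \<subseteq> F' \<Longrightarrow> F' = G" using A(3) by blast
  qed
  have zG: "z \<notin> G" using Gf(3) z1 GU by blast
  have restle: "\<And>h a. ?le (res h (inf (p h) a)) h"
    unfolding psleq_def using P1 by simp
  have mono: "\<And>h3 h1 a. ?le h3 h1 \<Longrightarrow> ?le (res h3 (inf (p h3) a)) (res h1 (inf (p h1) a))"
  proof -
    fix h3 h1 a assume "?le h3 h1"
    hence h: "p h3 \<le> p h1" "res h1 (p h3) = h3" unfolding psleq_def by metis+
    have e1: "res h3 (inf (p h3) a) = res h1 (inf (p h3) a)"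
      using h(1) P3[of "inf (p h3) a" "p h3" h1] h(2) by simp
    have e2: "res (res h1 (inf (p h1) a)) (inf (p h3) a) = res h1 (inf (p h3) a)"
      using h P3[of "inf (p h3) a" "inf (p h1) a" h1] by (simp add: le_infI1 inf_mono)
    show "?le (res h3 (inf (p h3) a)) (res h1 (inf (p h1) a))"
    proof -
      have i: "inf (p h3) a \<le> p h1" using h(1) by (simp add: le_infI1)
      have "p (res h3 (inf (p h3) a)) = inf (p h3) a" using P1 by simp
      moreover have "p (res h1 (inf (p h1) a)) = inf (p h1) a" using P1 by simp
      ultimately show ?thesis unfolding psleq_def using e1 e2 h(1) i
        by (auto intro: inf_mono)
    qed
  qed
  have trans: "\<And>a b c. ?le a b \<Longrightarrow> ?le b c \<Longrightarrow> ?le a c"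
  proof -
    fix a b c assume ab: "?le a b" and bc: "?le b c"
    hence "p a \<le> p b" "p b \<le> p c" "res b (p a) = a" "res c (p b) = b" unfolding psleq_def by metis+
    thus "?le a c" unfolding psleq_def using P3[of "p a" "p b" c] by auto
  qed
  have key: "\<And>u. u \<le> p j \<Longrightarrow> res j u \<notin> G \<Longrightarrow> \<exists>h\<in>G. inf (p h) u = bot"
  proof -
    fix u assume u: "u \<le> p j" "res j u \<notin> G"
    define F where "F = {b. \<exists>h\<in>G. ?le (res h (inf (p h) u)) b}"
    have "is_filter ?le F"
      unfolding is_filter_def
    proof (intro conjI ballI allI impI)
      show "F \<noteq> {}" using Gf(1) restle unfolding F_def by blast
    next
      fix a b assume "a \<in> F" "b \<in> F"
      then obtain h1 h2 where h: "h1 \<in> G" "h2 \<in> G" "?le (res h1 (inf (p h1) u)) a"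
        "?le (res h2 (inf (p h2) u)) b" unfolding F_def by blast
      then obtain h3 where "h3 \<in> G" "?le h3 h1" "?le h3 h2" using Gf(2) by blast
      then show "\<exists>c\<in>F. ?le c a \<and> ?le c b"
      proof -
        have r: "?le (res h3 (inf (p h3) u)) (res h3 (inf (p h3) u))" unfolding psleq_def using P2 by simp
        have "?le (res h3 (inf (p h3) u)) a" using trans[OF mono[OF \<open>?le h3 h1\<close>] h(3)] .
        moreover have "?le (res h3 (inf (p h3) u)) b" using trans[OF mono[OF \<open>?le h3 h2\<close>] h(4)] .
        moreover have "res h3 (inf (p h3) u) \<in> F" unfolding F_def using \<open>h3 \<in> G\<close> r by blast
        ultimately show ?thesis by blast
      qed
    next
      fix a b assume "a \<in> F" "?le a b"
      then show "b \<in> F" unfolding F_def using trans by blast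
    qed
    moreover have "G \<subseteq> F" unfolding F_def using restle by blast
    moreover have "res j u \<in> F"
    proof -
      have "inf (p j) u = u" using u by (simp add: inf_absorb2)
      hence "res j (inf (p j) u) = res j u" by simp
      moreover have "?le (res j u) (res j u)" unfolding psleq_def using P2 by simp
      ultimately have "?le (res j (inf (p j) u)) (res j u)" by simp
      thus ?thesis unfolding F_def using assms(5) by blast
    qed
    ultimately have "F = UNIV" using Gmax u(2) by blast
    hence "z \<in> F" by simp
    then obtain h where "h \<in> G" "?le (res h (inf (p h) u)) z" unfolding F_def by blast
    moreover have "p (res h (inf (p h) u)) = inf (p h) u" using P1 by simp
    ultimately show "\<exists>h\<in>G. inf (p h) u = bot" using pz unfolding psleq_def
      by (metis bot_unique)
  qed
  have jx: "?le x j" "?le y j" using assms(4) unfolding is_join_def by auto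
  hence ex: "res j (p x) = x" "p x \<le> p j" "res j (p y) = y" "p y \<le> p j"
    unfolding psleq_def by metis+
  have pj: "p j \<le> sup (p x) (p y)"
  proof -
    let ?k = "res j (sup (p x) (p y))"
    have pk: "p ?k = sup (p x) (p y)" using P1 ex by simp
    have "?le x ?k" "?le y ?k" unfolding psleq_def using pk P3 ex by auto
    hence "?le j ?k" using assms(4) unfolding is_join_def by blast
    thus ?thesis using pk pd by metis
  qed
  show ?thesis
  proof (rule ccontr)
    assume "\<not> ?thesis"
    hence "x \<notin> G" "y \<notin> G" by auto
    hence "res j (p x) \<notin> G" "res j (p y) \<notin> G" using ex by auto
    then obtain h1 h2 where h: "h1 \<in> G" "inf (p h1) (p x) = bot" "h2 \<in> G" "inf (p h2) (p y) = bot"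
      using key[of "p x"] key[of "p y"] ex by blast
    then obtain h3 where h3: "h3 \<in> G" "?le h3 h1" "?le h3 h2" using Gf(2) by blast
    then obtain h4 where h4: "h4 \<in> G" "?le h4 h3" "?le h4 j" using Gf(2) assms(5) by blast
    have "?le h4 h1" "?le h4 h2" using h3 h4 trans by blast+
    hence le: "p h4 \<le> p h1" "p h4 \<le> p h2" "p h4 \<le> p j" using h4 pd by auto
    have "p h4 = inf (p h4) (sup (p x) (p y))" using le pj by (simp add: inf_absorb1 order_trans)
    also have "\<dots> = sup (inf (p h4) (p x)) (inf (p h4) (p y))" by (rule inf_sup_distrib1)
    also have "\<dots> = bot"
    proof -
      have "inf (p h4) (p x) \<le> inf (p h1) (p x)" "inf (p h4) (p y) \<le> inf (p h2) (p y)"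
        using le by (simp_all add: le_infI1 inf_mono)
      thus ?thesis using h by (simp add: bot_unique)
    qed
    finally have "h4 = z" using z2 by blast
    with h4 zG show False by simp
  qed
qed

end
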